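(* Let $A_1$ and $A_2$ be simple and covering literals that are unifiable with a most general unifier $\sigma$. Then $A_1\sigma$ is simple.
   Context: A compound term is a term that is neither a variable nor a constant. $\mathrm{Var}(E)$ denotes the set of variables of $E$. A literal is simple if each argument is a variable, a constant, or a term $f(u_1,\dots,u_n)$ with each $u_i$ a variable or a constant. A literal is covering if every compound term $t$ occurring in it satisfies $\mathrm{Var}(t)$ equal to the set of variables of the literal. *)

theory Defs
  imports Main
begin

datatype ('f, 'v) trm = Var 'v | Fun 'f "('f, 'v) trm list"

text \<open>Literals: polarity, predicate symbol, argument list.\<close>
datatype ('p, 'f, 'v) lit = Lit bool 'p "('f, 'v) trm list"

fun vars_trm :: "('f, 'v) trm \<Rightarrow> 'v set" where
  "vars_trm (Var x) = {x}"
| "vars_trm (Fun f ts) = (\<Union>t \<in> set ts. vars_trm t)"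

fun args :: "('p, 'f, 'v) lit \<Rightarrow> ('f, 'v) trm list" where
  "args (Lit b p ts) = ts"

definition vars_lit :: "('p, 'f, 'v) lit \<Rightarrow> 'v set" where
  "vars_lit L = (\<Union>t \<in> set (args L). vars_trm t)"

fun subterms :: "('f, 'v) trm \<Rightarrow> ('f, 'v) trm set" where
  "subterms (Var x) = {Var x}"
| "subterms (Fun f ts) = insert (Fun f ts) (\<Union>t \<in> set ts. subterms t)"

definition subterms_lit :: "('p, 'f, 'v) lit \<Rightarrow> ('f, 'v) trm set" where
  "subterms_lit L = (\<Union>t \<in> set (args L). subterms t)"

definition is_var :: "('f, 'v) trm \<Rightarrow> bool" where
  "is_var t \<longleftrightarrow> (\<exists>x. t = Var x)"

definition is_const :: "('f, 'v) trm \<Rightarrow> bool" where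
  "is_const t \<longleftrightarrow> (\<exists>c. t = Fun c [])"

definition is_compound :: "('f, 'v) trm \<Rightarrow> bool" where
  "is_compound t \<longleftrightarrow> \<not> is_var t \<and> \<not> is_const t"

definition simple_lit :: "('p, 'f, 'v) lit \<Rightarrow> bool" where
  "simple_lit L \<longleftrightarrow> (\<forall>t \<in> set (args L).
      is_var t \<or> is_const t \<or>
      (\<exists>f us. t = Fun f us \<and> (\<forall>u \<in> set us. is_var u \<or> is_const u)))"

definition covering_lit :: "('p, 'f, 'v) lit \<Rightarrow> bool" where
  "covering_lit L \<longleftrightarrow> (\<forall>t \<in> subterms_lit L. is_compound t \<longrightarrow> vars_trm t = vars_lit L)"

type_synonym ('f, 'v) subst = "'v \<Rightarrow> ('f, 'v) trm"

fun subst_trm :: "('f, 'v) trm \<Rightarrow> ('f, 'v) subst \<Rightarrow> ('f, 'v) trm" where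
  "subst_trm (Var x) \<sigma> = \<sigma> x"
| "subst_trm (Fun f ts) \<sigma> = Fun f (map (\<lambda>t. subst_trm t \<sigma>) ts)"

fun subst_lit :: "('p, 'f, 'v) lit \<Rightarrow> ('f, 'v) subst \<Rightarrow> ('p, 'f, 'v) lit" where
  "subst_lit (Lit b p ts) \<sigma> = Lit b p (map (\<lambda>t. subst_trm t \<sigma>) ts)"

definition subst_comp :: "('f, 'v) subst \<Rightarrow> ('f, 'v) subst \<Rightarrow> ('f, 'v) subst" where
  "subst_comp \<sigma> \<delta> = (\<lambda>x. subst_trm (\<sigma> x) \<delta>)"

definition unifier :: "('p, 'f, 'v) lit \<Rightarrow> ('p, 'f, 'v) lit \<Rightarrow> ('f, 'v) subst \<Rightarrow> bool" where
  "unifier L1 L2 \<sigma> \<longleftrightarrow> subst_lit L1 \<sigma> = subst_lit L2 \<sigma>"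

definition mgu :: "('p, 'f, 'v) lit \<Rightarrow> ('p, 'f, 'v) lit \<Rightarrow> ('f, 'v) subst \<Rightarrow> bool" where
  "mgu L1 L2 \<sigma> \<longleftrightarrow> unifier L1 L2 \<sigma> \<and>
     (\<forall>\<theta>. unifier L1 L2 \<theta> \<longrightarrow> (\<exists>\<delta>. \<theta> = subst_comp \<sigma> \<delta>))"

end

theory Submission
  imports Defs
begin

fun tsize :: "('f, 'v) trm \<Rightarrow> nat" where
  "tsize (Var x) = 1"
| "tsize (Fun f ts) = Suc (sum_list (map tsize ts))"

lemma tsize_pos: "tsize t \<ge> 1"
  by (cases t) auto

lemma sum_list_one_strict:
  fixes f g :: "'a \<Rightarrow> nat"
  assumes "\<And>x. x \<in> set xs \<Longrightarrow> f x \<le> g x" "u \<in> set xs" "f u < g u"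
  shows "sum_list (map f xs) < sum_list (map g xs)"
  using assms
proof (induction xs)
  case Nil then show ?case by simp
next
  case (Cons a xs)
  show ?case
  proof (cases "u = a")
    case True
    have "sum_list (map f xs) \<le> sum_list (map g xs)"
      using Cons.prems(1) by (intro sum_list_mono) auto
    then show ?thesis using Cons.prems True by simp
  next
    case False
    then have "sum_list (map f xs) < sum_list (map g xs)"
      using Cons by auto
    moreover have "f a \<le> g a" using Cons.prems by auto
    ultimately show ?thesis by simp
  qed
qed

lemma subst_comp_trm: "subst_trm t (subst_comp \<sigma> \<delta>) = subst_trm (subst_trm t \<sigma>) \<delta>"
  by (induction t) (auto simp: subst_comp_def)

lemma tsize_subst_ge: "tsize t \<le> tsize (subst_trm t \<delta>)"
proof (induction t)
  case (Var x) then show ?case using tsize_pos by simp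
next
  case (Fun f ts)
  have "sum_list (map tsize ts) \<le> sum_list (map (\<lambda>t. tsize (subst_trm t \<delta>)) ts)"
    using Fun by (intro sum_list_mono) auto
  then show ?case by (simp add: o_def)
qed

lemma child_lt: "u \<in> set ts \<Longrightarrow> tsize u < tsize (Fun f ts)"
proof -
  assume "u \<in> set ts"
  then have "tsize u \<le> sum_list (map tsize ts)"
    by (simp add: member_le_sum_list)
  then show ?thesis by simp
qed

lemma subterm_le: "s \<in> subterms t \<Longrightarrow> tsize s \<le> tsize t"
proof (induction t)
  case (Var x) then show ?case by simp
next
  case (Fun f ts)
  show ?case
  proof (cases "s = Fun f ts")
    case True then show ?thesis by simp
  next
    case False
    then obtain u where u: "u \<in> set ts" "s \<in> subterms u" using Fun.prems by auto
    then have "tsize s \<le> tsize u" using Fun.IH by auto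
    also have "\<dots> < tsize (Fun f ts)" by (rule child_lt) (rule u(1))
    finally show ?thesis by simp
  qed
qed

lemma self_subterm: "t \<in> subterms t"
  by (cases t) auto

lemma var_subterm_subst: "x \<in> vars_trm t \<Longrightarrow> \<sigma> x \<in> subterms (subst_trm t \<sigma>)"
proof (induction t)
  case (Var y) then show ?case using self_subterm by simp
next
  case (Fun f ts) then show ?case by auto
qed

lemma subterm_trans: "s \<in> subterms t \<Longrightarrow> t \<in> subterms w \<Longrightarrow> s \<in> subterms w"
proof (induction w)
  case (Var x) then show ?case by simp
next
  case (Fun f ts)
  then show ?case by (cases "t = Fun f ts") auto
qed

fun repl :: "('f, 'v) trm \<Rightarrow> 'v \<Rightarrow> ('f, 'v) trm \<Rightarrow> ('f, 'v) trm" where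
  "repl r z (Var x) = Var x"
| "repl r z (Fun f ts) = (if Fun f ts = r then Var z else Fun f (map (repl r z) ts))"

lemma repl_le: "tsize (repl r z t) \<le> tsize t"
proof (induction t)
  case (Var x) then show ?case by simp
next
  case (Fun f ts)
  have "sum_list (map (\<lambda>t. tsize (repl r z t)) ts) \<le> sum_list (map tsize ts)"
    using Fun by (intro sum_list_mono) auto
  then show ?case by (simp add: o_def)
qed

lemma repl_lt: "r \<in> subterms t \<Longrightarrow> tsize r > 1 \<Longrightarrow> tsize (repl r z t) < tsize t"
proof (induction t)
  case (Var x) then show ?case by simp
next
  case (Fun f ts)
  show ?case
  proof (cases "Fun f ts = r")
    case True
    have "repl r z (Fun f ts) = Var z" by (simp only: repl.simps if_P[OF True])
    then show ?thesis using Fun.prems True by simp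
  next
    case False
    then obtain u where u: "u \<in> set ts" "r \<in> subterms u" using Fun.prems by auto
    have lt: "tsize (repl r z u) < tsize u" using Fun.IH u Fun.prems(2) by blast
    have "sum_list (map (\<lambda>t. tsize (repl r z t)) ts) < sum_list (map tsize ts)"
      by (rule sum_list_one_strict[where f="\<lambda>t. tsize (repl r z t)" and g=tsize, OF _ u(1) lt]) (rule repl_le)
    then show ?thesis using False by (simp add: o_def)
  qed
qed

definition sarg :: "('f, 'v) trm \<Rightarrow> bool" where
  "sarg t \<longleftrightarrow> is_var t \<or> is_const t \<or>
      (\<exists>f us. t = Fun f us \<and> (\<forall>u \<in> set us. is_var u \<or> is_const u))"

lemma repl_subst_vc:
  assumes "is_var u \<or> is_const u" "is_compound r"
  shows "subst_trm u (\<lambda>x. repl r z (\<sigma> x)) = repl r z (subst_trm u \<sigma>)"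
  using assms by (auto simp: is_var_def is_const_def is_compound_def)

lemma repl_subst_arg:
  assumes "sarg t" "is_compound r" "is_compound t \<longrightarrow> subst_trm t \<sigma> \<noteq> r"
  shows "subst_trm t (\<lambda>x. repl r z (\<sigma> x)) = repl r z (subst_trm t \<sigma>)"
proof -
  consider "is_var t \<or> is_const t" | f us where "t = Fun f us" "\<forall>u \<in> set us. is_var u \<or> is_const u"
    using assms(1) sarg_def by blast
  then show ?thesis
  proof cases
    case 1 show ?thesis using 1 assms(2) by (rule repl_subst_vc)
  next
    case 2
    show ?thesis
    proof (cases "us = []")
      case True then show ?thesis using 2 assms(2) by (auto simp: is_compound_def is_const_def)
    next
      case False
      then have "is_compound t" using 2 by (auto simp: is_compound_def is_const_def is_var_def)
      then have ne: "Fun f (map (\<lambda>t. subst_trm t \<sigma>) us) \<noteq> r" using assms(3) 2 by simp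
      have "map (\<lambda>u. subst_trm u (\<lambda>x. repl r z (\<sigma> x))) us = map (\<lambda>u. repl r z (subst_trm u \<sigma>)) us"
        using 2 repl_subst_vc[OF _ assms(2)] by auto
      then show ?thesis using 2 ne by (simp add: o_def)
    qed
  qed
qed

lemma args_subst: "args (subst_lit A \<sigma>) = map (\<lambda>t. subst_trm t \<sigma>) (args A)"
  by (cases A) auto

lemma simple_sarg: "simple_lit A \<Longrightarrow> t \<in> set (args A) \<Longrightarrow> sarg t"
  by (auto simp: simple_lit_def sarg_def)

lemma compound_form: "is_compound t \<Longrightarrow> \<exists>g ds. t = Fun g ds \<and> ds \<noteq> []"
  by (cases t) (auto simp: is_compound_def is_var_def is_const_def)

lemma find_var:
  assumes "simple_lit A" "Fun h cs \<in> set (args (subst_lit A \<sigma>))" "c \<in> set cs" "is_compound c"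
  shows "\<exists>x \<in> vars_lit A. c \<in> subterms (\<sigma> x)"
proof -
  obtain t where t: "t \<in> set (args A)" "Fun h cs = subst_trm t \<sigma>"
    using assms(2) args_subst by (auto simp: args_subst)
  have "sarg t" using simple_sarg assms(1) t(1) by blast
  then consider x where "t = Var x" | g where "t = Fun g []" | f us where "t = Fun f us" "\<forall>u \<in> set us. is_var u \<or> is_const u"
    unfolding sarg_def is_var_def is_const_def by blast
  then show ?thesis
  proof cases
    case 1
    then have "x \<in> vars_lit A" using t(1) by (auto simp: vars_lit_def intro!: bexI[of _ "Var x"])
    moreover have "c \<in> subterms (Fun h cs)" using assms(3) self_subterm[of c] by auto
    then have "c \<in> subterms (\<sigma> x)" using 1 t(2) by simp
    ultimately show ?thesis by blast
  next
    case 2 then show ?thesis using t(2) assms(3) by simp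
  next
    case 3
    then obtain u where u: "u \<in> set us" "c = subst_trm u \<sigma>" using t(2) assms(3) by auto
    then have "is_var u \<or> is_const u" using 3 by auto
    then obtain x where "u = Var x" using u(2) assms(4) by (auto simp: is_var_def is_const_def is_compound_def)
    then have "x \<in> vars_trm t" using u 3 by (auto intro!: bexI[of _ u])
    then have "x \<in> vars_lit A" using t(1) by (auto simp: vars_lit_def)
    moreover have "c = \<sigma> x" using u \<open>u = Var x\<close> by simp
    ultimately have "x \<in> vars_lit A" "c = \<sigma> x" by auto
    then show ?thesis using self_subterm by blast
  qed
qed

lemma cover_lt:
  assumes "covering_lit A" "t \<in> set (args A)" "is_compound t" "x \<in> vars_lit A"
  shows "tsize (\<sigma> x) < tsize (subst_trm t \<sigma>)"
proof -
  have "t \<in> subterms_lit A" using assms(2) self_subterm by (auto simp: subterms_lit_def)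
  then have "vars_trm t = vars_lit A" using assms(1,3) by (auto simp: covering_lit_def)
  then have xt: "x \<in> vars_trm t" using assms(4) by simp
  obtain g ds where gd: "t = Fun g ds" using compound_form assms(3) by blast
  then obtain u where u: "u \<in> set ds" "x \<in> vars_trm u" using xt by auto
  have "tsize (\<sigma> x) \<le> tsize (subst_trm u \<sigma>)" using var_subterm_subst[OF u(2)] subterm_le by blast
  also have "\<dots> < tsize (subst_trm t \<sigma>)" using gd u(1) child_lt[of "subst_trm u \<sigma>" "map (\<lambda>t. subst_trm t \<sigma>) ds" g] by simp
  finally show ?thesis .
qed

theorem mainTheorem6:
  fixes A1 A2 :: "('p, 'f, 'v) lit" and \<sigma> :: "('f, 'v) subst"
  assumes "simple_lit A1" and "covering_lit A1"
    and "simple_lit A2" and "covering_lit A2"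
    and "mgu A1 A2 \<sigma>"
  shows "simple_lit (subst_lit A1 \<sigma>)"
proof (rule ccontr)
  assume ns: "\<not> simple_lit (subst_lit A1 \<sigma>)"
  have eq: "subst_lit A1 \<sigma> = subst_lit A2 \<sigma>" using assms(5) by (simp add: mgu_def unifier_def)
  obtain a where a: "a \<in> set (args (subst_lit A1 \<sigma>))"
    "\<not> (is_var a \<or> is_const a \<or> (\<exists>f us. a = Fun f us \<and> (\<forall>u \<in> set us. is_var u \<or> is_const u)))"
    using ns by (auto simp: simple_lit_def)
  obtain h cs where acs: "a = Fun h cs" using a(2) by (cases a) (auto simp: is_var_def)
  then obtain r where r: "r \<in> set cs" "is_compound r" using a(2) by (auto simp: is_compound_def)
  have a2: "a \<in> set (args (subst_lit A2 \<sigma>))" using a(1) eq by simp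
  obtain x1 where x1: "x1 \<in> vars_lit A1" "r \<in> subterms (\<sigma> x1)"
    using find_var[OF assms(1) a(1)[unfolded acs] r] by blast
  obtain x2 where x2: "x2 \<in> vars_lit A2" "r \<in> subterms (\<sigma> x2)"
    using find_var[OF assms(3) a2[unfolded acs] r] by blast
  show False
  proof (cases "\<exists>t \<in> set (args A1) \<union> set (args A2). is_compound t \<and> subst_trm t \<sigma> = r")
    case True
    then obtain t where t: "t \<in> set (args A1) \<union> set (args A2)" "is_compound t" "subst_trm t \<sigma> = r"
      by blast
    show False
    proof (cases "t \<in> set (args A1)")
      case True
      have "tsize (\<sigma> x1) < tsize r" using cover_lt[where \<sigma>=\<sigma>, OF assms(2) True t(2) x1(1)] t(3) by simp
      then show False using subterm_le[OF x1(2)] by simp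
    next
      case False
      then have tA2: "t \<in> set (args A2)" using t(1) by blast
      have "tsize (\<sigma> x2) < tsize r" using cover_lt[where \<sigma>=\<sigma>, OF assms(4) tA2 t(2) x2(1)] t(3) by simp
      then show False using subterm_le[OF x2(2)] by simp
    qed
  next
    case False
    define z :: 'v where "z = undefined"
    define \<theta> where "\<theta> = (\<lambda>x. repl r z (\<sigma> x))"
    have key: "subst_trm t \<theta> = repl r z (subst_trm t \<sigma>)"
      if "t \<in> set (args A1) \<union> set (args A2)" for t
    proof -
      have "sarg t" using that simple_sarg assms(1,3) by blast
      moreover have "is_compound t \<longrightarrow> subst_trm t \<sigma> \<noteq> r" using False that by blast
      ultimately show ?thesis unfolding \<theta>_def by (rule repl_subst_arg[OF _ r(2)])
    qed
    have "unifier A1 A2 \<theta>"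
    proof -
      obtain b1 p1 ts1 where A1: "A1 = Lit b1 p1 ts1" by (cases A1)
      obtain b2 p2 ts2 where A2: "A2 = Lit b2 p2 ts2" by (cases A2)
      have e: "b1 = b2" "p1 = p2" "map (\<lambda>t. subst_trm t \<sigma>) ts1 = map (\<lambda>t. subst_trm t \<sigma>) ts2"
        using eq A1 A2 by auto
      have "map (\<lambda>t. subst_trm t \<theta>) ts1 = map (\<lambda>t. repl r z (subst_trm t \<sigma>)) ts1"
        by (rule map_cong[OF refl], rule key) (simp add: A1)
      also have "\<dots> = map (repl r z) (map (\<lambda>t. subst_trm t \<sigma>) ts1)" by simp
      also have "\<dots> = map (repl r z) (map (\<lambda>t. subst_trm t \<sigma>) ts2)" using e by simp
      also have "\<dots> = map (\<lambda>t. repl r z (subst_trm t \<sigma>)) ts2" by simp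
      also have "\<dots> = map (\<lambda>t. subst_trm t \<theta>) ts2"
        by (rule map_cong[OF refl], rule key[symmetric]) (simp add: A2)
      finally show ?thesis using A1 A2 e by (simp add: unifier_def)
    qed
    then obtain \<delta> where d: "\<theta> = subst_comp \<sigma> \<delta>" using assms(5) by (auto simp: mgu_def)
    obtain t where t: "t \<in> set (args A1)" "a = subst_trm t \<sigma>" using a(1) by (auto simp: args_subst)
    have k1: "subst_trm t \<theta> = repl r z a" using key[of t] t by simp
    have k2: "subst_trm t \<theta> = subst_trm a \<delta>" unfolding d t(2) by (rule subst_comp_trm)
    have "subst_trm a \<delta> = repl r z a" using k1 k2 by simp
    moreover have "tsize a \<le> tsize (subst_trm a \<delta>)" by (rule tsize_subst_ge)
    moreover have "tsize (repl r z a) < tsize a"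
    proof (rule repl_lt)
      show "r \<in> subterms a" using acs r(1) self_subterm by auto
      obtain g ds where "r = Fun g ds" "ds \<noteq> []" using compound_form r(2) by blast
      then show "tsize r > 1" using tsize_pos[of "hd ds"]
        by (cases ds) auto
    qed
    ultimately show False by simp
  qed
qed

end
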